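(* Let $\theta\in\mathcal{N}$ be bounded. For $n\ge1$ put $e^\theta_n=[\lambda(n-1;\theta),\lambda(n;\theta)]$ (with $\lambda(0;\theta)=*$). Then $P^\theta(\{(e^\theta_n)_{n=1}^\infty\})>0$ and \[P^\theta\Big(\bigcup_{\gamma\in\mathfrak{S}}\{\gamma((e^\theta_n)_{n=1}^\infty)\}\Big)=1.\]
   Context: Fix $q\in(0,1)$. Gelfand--Tsetlin graph: for $N\ge1$ let $\mathrm{Sign}_N=\{\lambda\in\mathbb{Z}^N\mid \lambda_1\ge\cdots\ge\lambda_N\}$, $\mathrm{Sign}_0=\{*\}$, $|\lambda|=\lambda_1+\cdots+\lambda_N$. For $\mu\in\mathrm{Sign}_{N-1}$, $\lambda\in\mathrm{Sign}_N$ write $\mu\prec\lambda$ if $\lambda_1\ge\mu_1\ge\lambda_2\ge\cdots\ge\mu_{N-1}\ge\lambda_N$ (with $*\prec\lambda$ for all $\lambda\in\mathrm{Sign}_1$). Edges of level $N$ are pairs $[\mu,\lambda]$ with $\mu\prec\lambda$, source $\mu$, range $\lambda$; a path is a sequence of edges with the range of each equal to the source of the next. Weight $w([\mu,\lambda])=q^{N|\mu|-(N-1)|\lambda|}$ for a level-$N$ edge, multiplicative along paths. For $\mu\in\mathrm{Sign}_K,\lambda\in\mathrm{Sign}_N$, $K<N$: $\dim_q(\mu,\lambda)=\sum_\alpha w(\alpha)$ over finite paths $\alpha$ from $\mu$ to $\lambda$; $\dim_q(\lambda)=\dim_q( *,\lambda)$. $\Omega$: infinite paths from $*$; $C_\alpha$: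 infinite paths beginning with the finite path $\alpha$; $\mathcal{C}$: $\sigma$-algebra generated by the $C_\alpha$. $P$ is $q$-central if $P(C_\alpha)/w(\alpha)=P(\{\omega\mid r(\omega_N)=\lambda\})/\dim_q(\lambda)$ for all $\lambda\in\mathrm{Sign}_N$ and paths $\alpha$ from $*$ to $\lambda$. For $\lambda\in\mathrm{Sign}_N$, each permutation $\gamma_0$ of the finite paths from $*$ to $\lambda$ acts on $\Omega$ by replacing the initial segment $(\omega_1,\dots,\omega_N)$ by its image under $\gamma_0$ when $\omega_N$ ends at $\lambda$ and fixing other $\omega$; $\mathfrak{S}_N$ is generated by these for all $\lambda\in\mathrm{Sign}_N$, $\mathfrak{S}=\bigcup_N\mathfrak{S}_N$. Let $\mathcal{N}=\{\theta\in\mathbb{Z}^\infty\mid\theta_1\le\theta_2\le\cdots\}$ and $\lambda(n;\theta)=(\theta_n,\dots,\theta_1)\in\mathrm{Sign}_n$. (Known fact:) for each $\theta\in\mathcal{N}$ there is a unique $q$-central probability measure $P^\theta$ with $P^\theta(C_\alpha)/\dim_q(\lambda)=\lim_{n\to\infty}\dim_q(\lambda,\lambda(n;\theta))/\dim_q(\lambda(n;\theta))$ for every finite path $\alpha$ from $*$ to $\lambda\in\mathrm{Sign}_N$; the $P^\theta$ are exactly the extreme, equivalently $\mathfrak{S}$-ergodic, $q$-central probability measures. *)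

theory Defs
  imports "HOL-Probability.Probability"
begin

text \<open>Signatures of length N are non-increasing integer lists of length N;
  the empty list plays the role of the unique element of Sign_0.\<close>
definition sign :: "nat \<Rightarrow> int list set" where
  "sign N = {l. length l = N \<and> sorted_wrt (\<lambda>x y. x \<ge> y) l}"

definition prec :: "int list \<Rightarrow> int list \<Rightarrow> bool" where
  "prec mu la \<longleftrightarrow> length la = Suc (length mu) \<and>
     (\<forall>i<length mu. la ! i \<ge> mu ! i \<and> mu ! i \<ge> la ! Suc i)"

type_synonym edge = "int list \<times> int list"

text \<open>An edge [mu, la]: source fst, range snd; its level is length la.\<close>
definition is_edge :: "edge \<Rightarrow> bool" where
  "is_edge e \<longleftrightarrow> fst e \<in> sign (length (fst e)) \<and> snd e \<in> sign (length (snd e))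
     \<and> prec (fst e) (snd e)"

definition wt :: "real \<Rightarrow> edge \<Rightarrow> real" where
  "wt q e = (let N = int (length (snd e)) in
     q powi (N * sum_list (fst e) - (N - 1) * sum_list (snd e)))"

definition path_wt :: "real \<Rightarrow> edge list \<Rightarrow> real" where
  "path_wt q al = prod_list (map (wt q) al)"

definition fpaths :: "int list \<Rightarrow> int list \<Rightarrow> edge list set" where
  "fpaths mu la = {al. al \<noteq> [] \<and> (\<forall>e\<in>set al. is_edge e) \<and> fst (hd al) = mu \<and>
     snd (last al) = la \<and> (\<forall>i. Suc i < length al \<longrightarrow> snd (al ! i) = fst (al ! Suc i))}"

definition dimq :: "real \<Rightarrow> int list \<Rightarrow> int list \<Rightarrow> real" where
  "dimq q mu la = (\<Sum>al\<in>fpaths mu la. path_wt q al)"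

definition dimq1 :: "real \<Rightarrow> int list \<Rightarrow> real" where
  "dimq1 q la = dimq q [] la"

text \<open>Infinite paths from *: omega n is the edge of level n+1 (i.e. omega_{n+1}).\<close>
definition Omega :: "(nat \<Rightarrow> edge) set" where
  "Omega = {om. (\<forall>n. is_edge (om n)) \<and> fst (om 0) = [] \<and>
     (\<forall>n. snd (om n) = fst (om (Suc n)))}"

definition cyl :: "edge list \<Rightarrow> (nat \<Rightarrow> edge) set" where
  "cyl al = {om \<in> Omega. \<forall>i<length al. om i = al ! i}"

definition GT_space :: "(nat \<Rightarrow> edge) measure" where
  "GT_space = sigma Omega {cyl al | al la. al \<in> fpaths [] la}"

definition ends :: "nat \<Rightarrow> int list \<Rightarrow> (nat \<Rightarrow> edge) set" where
  "ends N la = {om \<in> Omega. snd (om (N - 1)) = la}"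

definition q_central :: "real \<Rightarrow> (nat \<Rightarrow> edge) measure \<Rightarrow> bool" where
  "q_central q P \<longleftrightarrow> (\<forall>N\<ge>1. \<forall>la\<in>sign N. \<forall>al\<in>fpaths [] la.
     measure P (cyl al) / path_wt q al = measure P (ends N la) / dimq1 q la)"

text \<open>theta k stands for theta_{k+1}; lam theta n = (theta_n, ..., theta_1).\<close>
definition lam :: "(nat \<Rightarrow> int) \<Rightarrow> nat \<Rightarrow> int list" where
  "lam theta n = rev (map theta [0..<n])"

definition is_P_theta :: "real \<Rightarrow> (nat \<Rightarrow> int) \<Rightarrow> (nat \<Rightarrow> edge) measure \<Rightarrow> bool" where
  "is_P_theta q theta P \<longleftrightarrow> prob_space P \<and> sets P = sets GT_space \<and> q_central q P \<and>
     (\<forall>N\<ge>1. \<forall>la\<in>sign N.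
        (\<lambda>n. dimq q la (lam theta n) / dimq1 q (lam theta n))
          \<longlonglongrightarrow> measure P (ends N la) / dimq1 q la)"

definition epath :: "(nat \<Rightarrow> int) \<Rightarrow> nat \<Rightarrow> edge" where
  "epath theta k = (lam theta k, lam theta (Suc k))"

definition gen :: "nat \<Rightarrow> int list \<Rightarrow> (edge list \<Rightarrow> edge list) \<Rightarrow> (nat \<Rightarrow> edge) \<Rightarrow> (nat \<Rightarrow> edge)" where
  "gen N la g0 om = (if map om [0..<N] \<in> fpaths [] la
     then (\<lambda>i. if i < N then g0 (map om [0..<N]) ! i else om i) else om)"

text \<open>S_N: the group generated by the elementary transformations of level N (each is a
  bijection whose inverse is again elementary, so finite compositions suffice).\<close>
inductive_set SymN :: "nat \<Rightarrow> ((nat \<Rightarrow> edge) \<Rightarrow> (nat \<Rightarrow> edge)) set" for N where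
  SymN_id: "id \<in> SymN N"
| SymN_gen: "\<lbrakk>f \<in> SymN N; la \<in> sign N; bij_betw g0 (fpaths [] la) (fpaths [] la)\<rbrakk>
     \<Longrightarrow> gen N la g0 \<circ> f \<in> SymN N"

definition Sym :: "((nat \<Rightarrow> edge) \<Rightarrow> (nat \<Rightarrow> edge)) set" where
  "Sym = (\<Union>N. SymN N)"

end

theory Submission
  imports Defs
begin

lemma fpaths_Nil[simp]: "[] \<notin> fpaths mu la"
  by (simp add: fpaths_def)

lemma fpaths_single: "[x] \<in> fpaths mu la \<longleftrightarrow> is_edge x \<and> fst x = mu \<and> snd x = la"
  by (auto simp: fpaths_def)

lemma fpaths_snoc:
  "al @ [x] \<in> fpaths mu la \<longleftrightarrow> is_edge x \<and> snd x = la \<and>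
     ((al = [] \<and> fst x = mu) \<or> al \<in> fpaths mu (fst x))"
proof (cases "al = []")
  case True thus ?thesis by (auto simp: fpaths_def)
next
  case False
  show ?thesis
  proof
    assume A: "al @ [x] \<in> fpaths mu la"
    have ch: "\<forall>i. Suc i < length al \<longrightarrow> snd (al ! i) = fst (al ! Suc i)"
    proof (intro allI impI)
      fix i assume "Suc i < length al"
      with A have "snd ((al@[x]) ! i) = fst ((al@[x]) ! Suc i)" by (auto simp: fpaths_def)
      thus "snd (al ! i) = fst (al ! Suc i)" using \<open>Suc i < length al\<close> by (simp add: nth_append)
    qed
    have "snd ((al@[x]) ! (length al - 1)) = fst ((al@[x]) ! Suc (length al - 1))"
      using A False by (auto simp: fpaths_def)
    hence "snd (last al) = fst x" using False by (simp add: nth_append last_conv_nth)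
    thus "is_edge x \<and> snd x = la \<and> ((al = [] \<and> fst x = mu) \<or> al \<in> fpaths mu (fst x))"
      using A False ch by (auto simp: fpaths_def)
  next
    assume B: "is_edge x \<and> snd x = la \<and> ((al = [] \<and> fst x = mu) \<or> al \<in> fpaths mu (fst x))"
    hence al: "al \<in> fpaths mu (fst x)" using False by auto
    have "\<forall>i. Suc i < length (al@[x]) \<longrightarrow> snd ((al@[x]) ! i) = fst ((al@[x]) ! Suc i)"
    proof (intro allI impI)
      fix i assume i: "Suc i < length (al@[x])"
      show "snd ((al@[x]) ! i) = fst ((al@[x]) ! Suc i)"
      proof (cases "Suc i < length al")
        case True thus ?thesis using al by (auto simp: fpaths_def nth_append)
      next
        case F: False
        hence "i = length al - 1" using i by simp
        thus ?thesis using al False by (auto simp: fpaths_def nth_append last_conv_nth)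
      qed
    qed
    thus "al @ [x] \<in> fpaths mu la" using al B False by (auto simp: fpaths_def)
  qed
qed

lemma is_edge_len: "is_edge e \<Longrightarrow> length (snd e) = Suc (length (fst e))"
  by (simp add: is_edge_def prec_def)

lemma fpaths_length: "al \<in> fpaths mu la \<Longrightarrow> length la = length mu + length al"
proof (induction al arbitrary: la rule: rev_induct)
  case Nil thus ?case by simp
next
  case (snoc x al)
  thus ?case by (auto simp: fpaths_snoc dest: is_edge_len)
qed

lemma fpaths_append:
  "al0 \<in> fpaths a b \<Longrightarrow> al \<in> fpaths b c \<Longrightarrow> al0 @ al \<in> fpaths a c"
proof (induction al arbitrary: c rule: rev_induct)
  case Nil thus ?case by simp
next
  case (snoc x al)
  thus ?case
    by (auto simp: fpaths_snoc simp flip: append_assoc)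
qed


lemma prec_Nil_right[simp]: "\<not> prec mu []" by (simp add: prec_def)

lemma prec_single: "prec mu [a] \<longleftrightarrow> mu = []" by (auto simp: prec_def)

lemma prec_cons2:
  "prec mu (a # b # rest) \<longleftrightarrow> (\<exists>x m. mu = x # m \<and> b \<le> x \<and> x \<le> a \<and> prec m (b # rest))"
proof
  assume A: "prec mu (a # b # rest)"
  then obtain x m where mu: "mu = x # m" by (cases mu) (auto simp: prec_def)
  have "\<forall>i<length m. (b#rest) ! i \<ge> m ! i \<and> m ! i \<ge> (b#rest) ! Suc i"
  proof (intro allI impI)
    fix i assume "i < length m"
    thus "(b#rest) ! i \<ge> m ! i \<and> m ! i \<ge> (b#rest) ! Suc i"
      using A mu unfolding prec_def by (metis Suc_less_eq length_Cons nth_Cons_Suc)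
  qed
  moreover have "b \<le> x \<and> x \<le> a" using A mu unfolding prec_def by force
  ultimately show "\<exists>x m. mu = x # m \<and> b \<le> x \<and> x \<le> a \<and> prec m (b # rest)"
    using A mu by (auto simp: prec_def)
next
  assume "\<exists>x m. mu = x # m \<and> b \<le> x \<and> x \<le> a \<and> prec m (b # rest)"
  then obtain x m where mu: "mu = x # m" "b \<le> x" "x \<le> a" "prec m (b # rest)" by blast
  have "\<forall>i<length mu. mu ! i \<le> (a # b # rest) ! i \<and> (a # b # rest) ! Suc i \<le> mu ! i"
  proof (intro allI impI)
    fix i assume i: "i < length mu"
    show "mu ! i \<le> (a # b # rest) ! i \<and> (a # b # rest) ! Suc i \<le> mu ! i"
    proof (cases i)
      case 0 thus ?thesis using mu by simp
    next
      case (Suc j) thus ?thesis using mu i by (simp add: prec_def)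
    qed
  qed
  thus "prec mu (a # b # rest)" using mu by (simp add: prec_def)
qed

lemma prec_set_eq:
  "{mu. prec mu (a # b # rest)} = (\<lambda>(x, m). x # m) ` ({b..a} \<times> {m. prec m (b # rest)})"
  by (auto simp: prec_cons2 image_iff)

lemma prec_finite_card:
  "finite {mu. prec mu (a # l)} \<and>
   (sorted_wrt (\<ge>) (a # l) \<longrightarrow> card {mu. prec mu (a # l)} \<le> 2 ^ nat (a - last (a # l)))"
proof (induction l arbitrary: a)
  case Nil
  have "{mu. prec mu [a]} = {[]}" by (auto simp: prec_single)
  thus ?case by simp
next
  case (Cons b rest)
  have fin: "finite {mu. prec mu (a # b # rest)}"
    using Cons.IH[of b] by (simp add: prec_set_eq)
  moreover have "card {mu. prec mu (a # b # rest)} \<le> 2 ^ nat (a - last (a # b # rest))"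
    if s: "sorted_wrt (\<ge>) (a # b # rest)"
  proof -
    have ab: "b \<le> a" using s by simp
    have bl: "last (b # rest) \<le> b"
      using s by (cases rest) (auto simp: last_in_set)
    have "card {mu. prec mu (a # b # rest)} \<le> card ({b..a} \<times> {m. prec m (b # rest)})"
      unfolding prec_set_eq by (rule card_image_le) (use Cons.IH[of b] in auto)
    also have "\<dots> = nat (a - b + 1) * card {m. prec m (b # rest)}"
      by (simp add: card_cartesian_product)
    also have "\<dots> \<le> 2 ^ nat (a - b) * 2 ^ nat (b - last (b # rest))"
    proof (rule mult_mono)
      have "nat (a - b + 1) = Suc (nat (a - b))" using ab by simp
      also have "\<dots> \<le> 2 ^ nat (a - b)" by (rule Suc_leI, rule less_exp)
      finally show "nat (a - b + 1) \<le> 2 ^ nat (a - b)" .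
      show "card {m. prec m (b # rest)} \<le> 2 ^ nat (b - last (b # rest))"
        using Cons.IH[of b] s by simp
    qed auto
    also have "\<dots> = 2 ^ nat (a - last (a # b # rest))"
      using ab bl by (simp flip: power_add add: nat_add_distrib[symmetric])
    finally show ?thesis .
  qed
  ultimately show ?case by blast
qed

lemma prec_finite: "finite {mu. prec mu la}"
proof (cases la)
  case Nil thus ?thesis by simp
next
  case (Cons a l) thus ?thesis using prec_finite_card by blast
qed

lemma edge_set_finite: "finite {mu. is_edge (mu, la)}"
  by (rule finite_subset[OF _ prec_finite[of la]]) (auto simp: is_edge_def)

lemma fpaths_decomp:
  assumes "length la \<ge> 2"
  shows "fpaths [] la = (\<Union>mu\<in>{mu. is_edge (mu, la)}. (\<lambda>al. al @ [(mu, la)]) ` fpaths [] mu)"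
proof (intro equalityI subsetI)
  fix al assume al: "al \<in> fpaths [] la"
  then obtain al' x where ax: "al = al' @ [x]"
    by (metis fpaths_Nil rev_exhaust)
  with al have x: "is_edge x" "snd x = la" "(al' = [] \<and> fst x = []) \<or> al' \<in> fpaths [] (fst x)"
    by (auto simp: fpaths_snoc)
  have "al' \<noteq> []"
  proof
    assume "al' = []"
    with x have "fst x = []" by auto
    with x is_edge_len[of x] assms show False by simp
  qed
  with x have "al' \<in> fpaths [] (fst x)" by auto
  thus "al \<in> (\<Union>mu\<in>{mu. is_edge (mu, la)}. (\<lambda>al. al @ [(mu, la)]) ` fpaths [] mu)"
    using x ax by (intro UN_I[of "fst x"]) (auto simp: prod_eq_iff)
next
  fix al assume "al \<in> (\<Union>mu\<in>{mu. is_edge (mu, la)}. (\<lambda>al. al @ [(mu, la)]) ` fpaths [] mu)"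
  then obtain mu al' where "is_edge (mu, la)" "al' \<in> fpaths [] mu" "al = al' @ [(mu, la)]" by auto
  thus "al \<in> fpaths [] la" by (auto simp: fpaths_snoc)
qed

lemma fpaths_finite: "finite (fpaths [] la)"
proof (induction "length la" arbitrary: la rule: less_induct)
  case less
  consider "length la = 0" | "length la = 1" | "length la \<ge> 2" by linarith
  thus ?case
  proof cases
    case 1
    hence "fpaths [] la = {}" using fpaths_length by fastforce
    thus ?thesis by simp
  next
    case 2
    have "fpaths [] la \<subseteq> {[([], la)]}"
    proof
      fix al assume al: "al \<in> fpaths [] la"
      then obtain al' x where ax: "al = al' @ [x]" by (metis fpaths_Nil rev_exhaust)
      with al have x: "is_edge x" "snd x = la" "(al' = [] \<and> fst x = []) \<or> al' \<in> fpaths [] (fst x)"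
        by (auto simp: fpaths_snoc)
      have "al' = []"
      proof (rule ccontr)
        assume "al' \<noteq> []"
        with x have "al' \<in> fpaths [] (fst x)" by auto
        hence "length (fst x) = length al'" using fpaths_length by fastforce
        with \<open>al' \<noteq> []\<close> x is_edge_len[of x] 2 show False by simp
      qed
      with x ax show "al \<in> {[([], la)]}" by (auto simp: prod_eq_iff)
    qed
    thus ?thesis by (rule finite_subset) simp
  next
    case 3
    have "\<forall>mu\<in>{mu. is_edge (mu, la)}. finite (fpaths [] mu)"
      using less is_edge_len by fastforce
    thus ?thesis using 3 edge_set_finite[of la] by (simp add: fpaths_decomp)
  qed
qed

lemma path_wt_append[simp]: "path_wt q (xs @ ys) = path_wt q xs * path_wt q ys"
  by (simp add: path_wt_def)

lemma path_wt_single[simp]: "path_wt q [x] = wt q x"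
  by (simp add: path_wt_def)

lemma wt_pos: "0 < q \<Longrightarrow> 0 < wt q e"
  by (simp add: wt_def Let_def)

lemma path_wt_pos: "0 < q \<Longrightarrow> 0 < path_wt q al"
  by (induction al rule: rev_induct) (auto simp: wt_pos path_wt_def)

lemma dimq1_nonneg: "0 < q \<Longrightarrow> 0 \<le> dimq1 q la"
  unfolding dimq1_def dimq_def by (intro sum_nonneg) (auto intro: less_imp_le path_wt_pos)

lemma dimq1_rec:
  assumes "length la \<ge> 2"
  shows "dimq1 q la = (\<Sum>mu\<in>{mu. is_edge (mu, la)}. dimq1 q mu * wt q (mu, la))"
proof -
  have "dimq1 q la = (\<Sum>mu\<in>{mu. is_edge (mu, la)}. \<Sum>al\<in>(\<lambda>al. al @ [(mu, la)]) ` fpaths [] mu. path_wt q al)"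
    unfolding dimq1_def dimq_def fpaths_decomp[OF assms]
    by (rule sum.UNION_disjoint) (auto simp: edge_set_finite fpaths_finite)
  also have "\<dots> = (\<Sum>mu\<in>{mu. is_edge (mu, la)}. dimq1 q mu * wt q (mu, la))"
  proof (rule sum.cong[OF refl])
    fix mu
    have "(\<Sum>al\<in>(\<lambda>al. al @ [(mu, la)]) ` fpaths [] mu. path_wt q al) =
          (\<Sum>al\<in>fpaths [] mu. path_wt q (al @ [(mu, la)]))"
      by (rule sum.reindex_cong[where l = "\<lambda>al. al @ [(mu, la)]"]) (auto simp: inj_on_def)
    also have "\<dots> = dimq1 q mu * wt q (mu, la)"
      by (simp add: dimq1_def dimq_def sum_distrib_right)
    finally show "(\<Sum>al\<in>(\<lambda>al. al @ [(mu, la)]) ` fpaths [] mu. path_wt q al) = dimq1 q mu * wt q (mu, la)" .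
  qed
  finally show ?thesis .
qed


lemma lam_Suc: "lam theta (Suc M) = theta M # lam theta M"
  by (simp add: lam_def)

lemma length_lam[simp]: "length (lam theta M) = M"
  by (simp add: lam_def)

lemma set_lam: "set (lam theta M) = theta ` {0..<M}"
  by (simp add: lam_def)

lemma lam_sign: assumes "mono theta" shows "lam theta M \<in> sign M"
proof -
  have "sorted_wrt (\<le>) (map theta [0..<M])"
    unfolding sorted_wrt_map by (rule sorted_wrt_mono_rel[OF _ sorted_wrt_upt])
      (use assms in \<open>auto simp: mono_def\<close>)
  thus ?thesis by (simp add: sign_def lam_def sorted_wrt_rev)
qed

lemma prec_cons_self:
  assumes "sorted_wrt (\<ge>) mu" "mu \<noteq> [] \<longrightarrow> hd mu \<le> a"
  shows "prec mu (a # mu)"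
proof -
  have "\<forall>i<length mu. mu ! i \<le> (a # mu) ! i \<and> (a # mu) ! Suc i \<le> mu ! i"
  proof (intro allI impI)
    fix i assume i: "i < length mu"
    show "mu ! i \<le> (a # mu) ! i \<and> (a # mu) ! Suc i \<le> mu ! i"
    proof (cases i)
      case 0 thus ?thesis using assms i by (cases mu) auto
    next
      case (Suc j) thus ?thesis using assms i by (auto simp: sorted_wrt_iff_nth_less)
    qed
  qed
  thus ?thesis by (simp add: prec_def)
qed

lemma epath_edge: assumes "mono theta" shows "is_edge (epath theta k)"
proof -
  have "prec (lam theta k) (theta k # lam theta k)"
  proof (rule prec_cons_self)
    show "sorted_wrt (\<ge>) (lam theta k)" using lam_sign[OF assms] by (simp add: sign_def)
    show "lam theta k \<noteq> [] \<longrightarrow> hd (lam theta k) \<le> theta k"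
      using assms by (cases k) (auto simp: lam_Suc mono_def lam_def)
  qed
  thus ?thesis using lam_sign[OF assms]
    by (simp add: is_edge_def epath_def lam_Suc[symmetric])
qed

lemma epath_Omega: assumes "mono theta" shows "epath theta \<in> Omega"
  using epath_edge[OF assms] by (simp add: Omega_def epath_def lam_def)

lemma Omega_seg:
  assumes "om \<in> Omega" "N < M"
  shows "map om [N..<M] \<in> fpaths (fst (om N)) (snd (om (M - 1)))"
  using assms(2)
proof (induction M)
  case 0 thus ?case by simp
next
  case (Suc M)
  show ?case
  proof (cases "N = M")
    case True thus ?thesis using assms(1) by (simp add: fpaths_single Omega_def)
  next
    case False
    hence NM: "N < M" using Suc by simp
    have "map om [N..<Suc M] = map om [N..<M] @ [om M]" using NM by simp
    moreover have "snd (om (M - 1)) = fst (om M)"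
    proof -
      have "M = Suc (M - 1)" using NM by simp
      thus ?thesis using assms(1) unfolding Omega_def by (metis (mono_tags, lifting) mem_Collect_eq)
    qed
    moreover have "is_edge (om M)" using assms(1) by (simp add: Omega_def)
    ultimately show ?thesis using Suc.IH[OF NM] by (simp add: fpaths_snoc)
  qed
qed

lemma Omega_prefix:
  assumes "om \<in> Omega" "0 < M"
  shows "map om [0..<M] \<in> fpaths [] (snd (om (M - 1)))"
  using Omega_seg[OF assms] assms(1) by (simp add: Omega_def)

definition splc :: "edge list \<Rightarrow> (nat \<Rightarrow> edge) \<Rightarrow> nat \<Rightarrow> edge" where
  "splc al om = (\<lambda>i. if i < length al then al ! i else om i)"

lemma splc_Omega:
  assumes al: "al \<in> fpaths [] la" and om: "om \<in> Omega" and la: "snd (om (length al - 1)) = la"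
  shows "splc al om \<in> Omega"
proof -
  have ne: "al \<noteq> []" using al by auto
  have "is_edge (splc al om n)" for n
    using al om by (auto simp: splc_def fpaths_def Omega_def)
  moreover have "fst (splc al om 0) = []"
    using al ne by (auto simp: splc_def fpaths_def hd_conv_nth)
  moreover have "snd (splc al om n) = fst (splc al om (Suc n))" for n
  proof -
    consider "Suc n < length al" | "Suc n = length al" | "Suc n > length al" by linarith
    thus ?thesis
    proof cases
      case 1 thus ?thesis using al by (auto simp: splc_def fpaths_def)
    next
      case 2
      hence n: "n = length al - 1" by simp
      have "snd (al ! n) = la" using al ne unfolding n by (auto simp: fpaths_def last_conv_nth)
      moreover have "snd (om n) = fst (om (Suc n))" using om by (simp add: Omega_def)
      moreover have "snd (om n) = la" using la n by simp
      ultimately show ?thesis using 2 by (simp add: splc_def)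
    next
      case 3 thus ?thesis using om by (auto simp: splc_def Omega_def)
    qed
  qed
  ultimately show ?thesis by (simp add: Omega_def)
qed

lemma map_splc:
  assumes "length al \<le> M"
  shows "map (splc al om) [0..<M] = al @ map om [length al..<M]"
  using assms by (intro nth_equalityI) (auto simp: splc_def nth_append)

lemma splc_eq_self: "map om [0..<N] = al \<Longrightarrow> splc al om = om"
  unfolding splc_def by (rule ext) auto


lemma sum_list_le_nth:
  fixes xs ys :: "int list"
  assumes "length xs = length ys" "\<forall>i<length ys. ys ! i \<le> xs ! i"
  shows "sum_list ys \<le> sum_list xs \<and> (xs \<noteq> ys \<longrightarrow> sum_list ys < sum_list xs)"
proof -
  have s: "sum_list xs = (\<Sum>i = 0..<length ys. xs ! i)" "sum_list ys = (\<Sum>i = 0..<length ys. ys ! i)"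
    using assms(1) by (simp_all add: sum_list_sum_nth)
  have le: "sum_list ys \<le> sum_list xs" unfolding s by (rule sum_mono) (use assms in auto)
  moreover have "sum_list ys < sum_list xs" if ne: "xs \<noteq> ys"
  proof -
    obtain i where i: "i < length ys" "xs ! i \<noteq> ys ! i"
      using ne assms(1) by (auto simp: list_eq_iff_nth_eq)
    have lt: "ys ! i < xs ! i" using assms(2) i by force
    show ?thesis unfolding s
    proof (rule sum_strict_mono_ex1)
      show "\<forall>x\<in>{0..<length ys}. ys ! x \<le> xs ! x" using assms(2) by simp
      show "\<exists>a\<in>{0..<length ys}. ys ! a < xs ! a" using i lt by auto
    qed simp
  qed
  ultimately show ?thesis by blast
qed

lemma sum_lam_Suc: "sum_list (lam theta (Suc M)) = theta M + sum_list (lam theta M)"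
  by (simp add: lam_Suc)

definition tt :: "(nat \<Rightarrow> int) \<Rightarrow> nat \<Rightarrow> int list \<Rightarrow> int" where
  "tt theta M la = sum_list la - sum_list (lam theta M)"
definition RR :: "(nat \<Rightarrow> int) \<Rightarrow> int \<Rightarrow> nat \<Rightarrow> int list set" where
  "RR theta c M = {la \<in> sign M. set la \<subseteq> {theta 0..c} \<and> 0 \<le> tt theta M la}"
definition QQ :: "(nat \<Rightarrow> int) \<Rightarrow> int \<Rightarrow> real" where
  "QQ theta c = (2::real) ^ nat (c - theta 0)"
definition EE :: "(nat \<Rightarrow> int) \<Rightarrow> nat \<Rightarrow> edge list" where
  "EE theta M = map (epath theta) [0..<M]"

context
  fixes q :: real and theta :: "nat \<Rightarrow> int" and K :: nat and c :: int
  assumes q0: "0 < q" and q1: "q < 1" and mono: "mono theta" and Kc: "\<forall>j\<ge>K. theta j = c"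
begin

lemma theta_le_c: "theta j \<le> c"
proof (cases "j \<le> K")
  case True thus ?thesis using mono Kc by (auto simp: mono_def)
next
  case False thus ?thesis using Kc by simp
qed

lemma EE_Suc: "EE theta (Suc M) = EE theta M @ [(lam theta M, lam theta (Suc M))]"
  by (simp add: EE_def epath_def)

lemma edge_props:
  assumes la: "la \<in> RR theta c (Suc M)" and M: "M \<ge> K" and e: "is_edge (mu, la)"
  shows "mu \<in> RR theta c M" "tt theta (Suc M) la \<le> tt theta M mu"
    "mu \<noteq> tl la \<Longrightarrow> tt theta (Suc M) la + 1 \<le> tt theta M mu"
proof -
  have pr: "prec mu la" and mus: "mu \<in> sign (length mu)" using e by (auto simp: is_edge_def)
  have lenla: "length la = Suc M" using la by (simp add: RR_def sign_def)
  then obtain a la' where la_eq: "la = a # la'" by (cases la) auto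
  have lmu: "length mu = M" using pr lenla by (simp add: prec_def)
  have setla: "set la \<subseteq> {theta 0..c}" using la by (simp add: RR_def)
  have ineq: "\<forall>i<length mu. mu ! i \<le> la ! i \<and> la ! Suc i \<le> mu ! i" using pr by (simp add: prec_def)
  have "set mu \<subseteq> {theta 0..c}"
  proof
    fix x assume "x \<in> set mu"
    then obtain i where i: "i < length mu" "x = mu ! i" by (auto simp: in_set_conv_nth)
    have "la ! i \<in> set la" "la ! Suc i \<in> set la" using i lenla lmu by auto
    thus "x \<in> {theta 0..c}" using ineq i setla by fastforce
  qed
  have ac: "a \<le> c" using setla la_eq by auto
  have sl: "sum_list la' \<le> sum_list mu \<and> (mu \<noteq> la' \<longrightarrow> sum_list la' < sum_list mu)"
    by (rule sum_list_le_nth) (use lmu lenla la_eq ineq in auto)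
  have diff: "tt theta M mu - tt theta (Suc M) la = (sum_list mu - sum_list la') + (c - a)"
    unfolding tt_def la_eq using Kc M by (simp add: sum_lam_Suc)
  show ge: "tt theta (Suc M) la \<le> tt theta M mu" using diff sl ac by linarith
  show "mu \<noteq> tl la \<Longrightarrow> tt theta (Suc M) la + 1 \<le> tt theta M mu" using diff sl ac la_eq by auto
  have "0 \<le> tt theta (Suc M) la" using la by (simp add: RR_def)
  thus "mu \<in> RR theta c M" using ge mus lmu \<open>set mu \<subseteq> _\<close> by (simp add: RR_def)
qed

lemma edge_card:
  assumes la: "la \<in> RR theta c (Suc M)"
  shows "real (card {mu. is_edge (mu, la)}) \<le> QQ theta c"
proof -
  have lenla: "length la = Suc M" and sorted: "sorted_wrt (\<ge>) la" using la by (auto simp: RR_def sign_def)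
  then obtain a la' where la_eq: "la = a # la'" by (cases la) auto
  have setla: "set la \<subseteq> {theta 0..c}" using la by (simp add: RR_def)
  have "card {mu. is_edge (mu, la)} \<le> card {mu. prec mu la}"
    by (rule card_mono[OF prec_finite]) (auto simp: is_edge_def)
  also have "\<dots> \<le> 2 ^ nat (a - last la)" using prec_finite_card[of a la'] sorted la_eq by simp
  also have "\<dots> \<le> 2 ^ nat (c - theta 0)"
  proof (rule power_increasing)
    have "a \<le> c" "theta 0 \<le> last la" using setla la_eq last_in_set[of la] by auto
    thus "nat (a - last la) \<le> nat (c - theta 0)" by simp
  qed simp
  finally have "real (card {mu. is_edge (mu, la)}) \<le> real ((2::nat) ^ nat (c - theta 0))"
    by (rule of_nat_mono)
  thus ?thesis by (simp add: QQ_def)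
qed

lemma wt_edge:
  assumes la: "la \<in> RR theta c (Suc M)" and M: "M \<ge> K" and e: "is_edge (mu, la)"
  shows "wt q (mu, la) = wt q (lam theta M, lam theta (Suc M)) *
           q powi ((int M + 1) * tt theta M mu - int M * tt theta (Suc M) la)"
proof -
  have lenla: "length la = Suc M" using la by (simp add: RR_def sign_def)
  have "wt q (mu, la) = q powi ((int M + 1) * sum_list mu - int M * sum_list la)"
    by (simp add: wt_def lenla add.commute)
  also have "(int M + 1) * sum_list mu - int M * sum_list la =
     ((int M + 1) * sum_list (lam theta M) - int M * sum_list (lam theta (Suc M))) +
     ((int M + 1) * tt theta M mu - int M * tt theta (Suc M) la)"
    by (simp add: tt_def algebra_simps)
  also have "q powi \<dots> = q powi ((int M + 1) * sum_list (lam theta M) - int M * sum_list (lam theta (Suc M))) *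
       q powi ((int M + 1) * tt theta M mu - int M * tt theta (Suc M) la)"
    using q0 by (simp add: power_int_add)
  also have "q powi ((int M + 1) * sum_list (lam theta M) - int M * sum_list (lam theta (Suc M))) =
       wt q (lam theta M, lam theta (Suc M))"
    by (simp add: wt_def add.commute)
  finally show ?thesis .
qed

end

context
  fixes q :: real and theta :: "nat \<Rightarrow> int" and K :: nat and c :: int
  assumes q0: "0 < q" and q1: "q < 1" and mono: "mono theta" and Kc: "\<forall>j\<ge>K. theta j = c"
begin

lemma step_bound:
  assumes M: "M \<ge> Suc K" and A: "A \<ge> 0"
    and IH: "\<forall>mu\<in>RR theta c M. dimq1 q mu \<le> A * path_wt q (EE theta M) * q powi ((1 - int K) * tt theta M mu)"
    and la: "la \<in> RR theta c (Suc M)"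
  shows "dimq1 q la \<le> A * (1 + QQ theta c * q ^ (M - K)) * path_wt q (EE theta (Suc M)) *
           q powi ((1 - int K) * tt theta (Suc M) la)"
proof -
  let ?S = "{mu. is_edge (mu, la)}"
  let ?T = "tt theta (Suc M) la"
  let ?W = "wt q (lam theta M, lam theta (Suc M))"
  let ?w = "path_wt q (EE theta M)"
  define m where "m = int M + 2 - int K"
  define Z where "Z = q powi ((m - int M) * ?T)"
  have MK: "M \<ge> K" using M by simp
  have m0: "m \<ge> 0" "m \<ge> int M - int K" using MK by (auto simp: m_def)
  have T0: "0 \<le> ?T" using la by (simp add: RR_def)
  have Z0: "0 < Z" using q0 by (simp add: Z_def)
  have W0: "0 < ?W" using q0 by (rule wt_pos)
  have w0: "0 < ?w" using q0 by (rule path_wt_pos)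
  have lenla: "length la = Suc M" using la by (simp add: RR_def sign_def)
  have "dimq1 q la = (\<Sum>mu\<in>?S. dimq1 q mu * wt q (mu, la))"
    by (rule dimq1_rec) (use lenla M in simp)
  also have "\<dots> \<le> (\<Sum>mu\<in>?S. A * ?w * ?W * q powi (m * tt theta M mu - int M * ?T))"
  proof (rule sum_mono)
    fix mu assume "mu \<in> ?S"
    hence e: "is_edge (mu, la)" by simp
    have muR: "mu \<in> RR theta c M" by (rule edge_props(1)[OF q0 q1 mono Kc la MK e])
    have d: "dimq1 q mu \<le> A * ?w * q powi ((1 - int K) * tt theta M mu)" using IH muR by blast
    have wte: "wt q (mu, la) = ?W * q powi ((int M + 1) * tt theta M mu - int M * ?T)"
      by (rule wt_edge[OF q0 q1 mono Kc la MK e])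
    have "dimq1 q mu * wt q (mu, la) \<le> A * ?w * q powi ((1 - int K) * tt theta M mu) * wt q (mu, la)"
      by (rule mult_right_mono[OF d]) (use wt_pos[OF q0] in \<open>simp add: less_imp_le\<close>)
    also have "\<dots> = A * ?w * ?W * (q powi ((1 - int K) * tt theta M mu) * q powi ((int M + 1) * tt theta M mu - int M * ?T))"
      unfolding wte by (simp add: algebra_simps)
    also have "q powi ((1 - int K) * tt theta M mu) * q powi ((int M + 1) * tt theta M mu - int M * ?T) =
               q powi (m * tt theta M mu - int M * ?T)"
      using q0 by (simp add: power_int_add[symmetric] m_def algebra_simps)
    finally show "dimq1 q mu * wt q (mu, la) \<le> A * ?w * ?W * q powi (m * tt theta M mu - int M * ?T)" .
  qed
  also have "\<dots> = A * ?w * ?W * (\<Sum>mu\<in>?S. q powi (m * tt theta M mu - int M * ?T))"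
    by (simp add: sum_distrib_left)
  also have "(\<Sum>mu\<in>?S. q powi (m * tt theta M mu - int M * ?T)) \<le>
             (\<Sum>mu\<in>?S. (if mu = tl la then Z else 0) + Z * q ^ (M - K))"
  proof (rule sum_mono)
    fix mu assume "mu \<in> ?S"
    hence e: "is_edge (mu, la)" by simp
    have sT: "?T \<le> tt theta M mu" by (rule edge_props(2)[OF q0 q1 mono Kc la MK e])
    show "q powi (m * tt theta M mu - int M * ?T) \<le> (if mu = tl la then Z else 0) + Z * q ^ (M - K)"
    proof (cases "mu = tl la")
      case True
      have "m * ?T \<le> m * tt theta M mu" using sT m0 by (simp add: mult_left_mono)
      hence "q powi (m * tt theta M mu - int M * ?T) \<le> Z"
        unfolding Z_def using q0 q1 by (intro power_int_decreasing) (auto simp: algebra_simps)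
      moreover have "0 \<le> Z * q ^ (M - K)" using Z0 q0 by simp
      ultimately show ?thesis using True by simp
    next
      case False
      have sT1: "?T + 1 \<le> tt theta M mu" by (rule edge_props(3)[OF q0 q1 mono Kc la MK e False])
      have "m * (?T + 1) \<le> m * tt theta M mu" using sT1 m0 by (simp add: mult_left_mono)
      hence ge: "(m - int M) * ?T + int (M - K) \<le> m * tt theta M mu - int M * ?T"
        using m0 MK by (simp add: algebra_simps of_nat_diff)
      have "q powi (m * tt theta M mu - int M * ?T) \<le> q powi ((m - int M) * ?T + int (M - K))"
        using q0 q1 ge by (intro power_int_decreasing) auto
      also have "\<dots> = Z * q ^ (M - K)"
        using q0 by (simp add: power_int_add Z_def)
      finally show ?thesis using False by simp
    qed
  qed
  also have "\<dots> = (if tl la \<in> ?S then Z else 0) + real (card ?S) * (Z * q ^ (M - K))"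
    by (simp add: sum.distrib sum.delta[OF edge_set_finite])
  also have "\<dots> \<le> Z + QQ theta c * (Z * q ^ (M - K))"
  proof -
    have "real (card ?S) * (Z * q ^ (M - K)) \<le> QQ theta c * (Z * q ^ (M - K))"
      by (rule mult_right_mono[OF edge_card[OF q0 q1 mono Kc la]]) (use Z0 q0 in simp)
    moreover have "(if tl la \<in> ?S then Z else 0) \<le> Z" using Z0 by simp
    ultimately show ?thesis by linarith
  qed
  finally have "dimq1 q la \<le> A * ?w * ?W * (Z + QQ theta c * (Z * q ^ (M - K)))"
    using A w0 W0 by (simp add: mult_left_mono)
  also have "\<dots> = A * (1 + QQ theta c * q ^ (M - K)) * (?w * ?W) * Z"
    by (simp add: algebra_simps)
  also have "?w * ?W = path_wt q (EE theta (Suc M))"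
    by (simp add: EE_Suc[OF q0 q1 mono Kc])
  also have "Z \<le> q powi ((1 - int K) * ?T)"
    unfolding Z_def using q0 q1 T0 by (intro power_int_decreasing) (auto simp: m_def algebra_simps)
  hence "A * (1 + QQ theta c * q ^ (M - K)) * path_wt q (EE theta (Suc M)) * Z \<le>
         A * (1 + QQ theta c * q ^ (M - K)) * path_wt q (EE theta (Suc M)) * q powi ((1 - int K) * ?T)"
  proof (rule mult_left_mono)
    have "0 \<le> QQ theta c" by (simp add: QQ_def)
    thus "0 \<le> A * (1 + QQ theta c * q ^ (M - K)) * path_wt q (EE theta (Suc M))"
      using A q0 path_wt_pos[OF q0] by (simp add: less_imp_le)
  qed
  finally show ?thesis .
qed

end

context
  fixes q :: real and theta :: "nat \<Rightarrow> int" and K :: nat and c :: int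
  assumes q0: "0 < q" and q1: "q < 1" and mono: "mono theta" and Kc: "\<forall>j\<ge>K. theta j = c"
begin

lemma RR_finite: "finite (RR theta c M)"
proof (rule finite_subset)
  show "RR theta c M \<subseteq> {xs. set xs \<subseteq> {theta 0..c} \<and> length xs = M}"
    by (auto simp: RR_def sign_def)
  show "finite {xs. set xs \<subseteq> {theta 0..c} \<and> length xs = M}"
    by (rule finite_lists_length_eq) simp
qed

lemma lam_RR: "lam theta n \<in> RR theta c n"
proof -
  have "set (lam theta n) \<subseteq> {theta 0..c}"
    using mono theta_le_c[OF q0 q1 mono Kc] by (auto simp: set_lam mono_def)
  thus ?thesis using lam_sign[OF mono] by (simp add: RR_def tt_def)
qed

lemma dim_bound_aux:
  defines "A0 \<equiv> (\<Sum>la\<in>RR theta c (Suc K). dimq1 q la /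
                   (path_wt q (EE theta (Suc K)) * q powi ((1 - int K) * tt theta (Suc K) la)))"
  assumes M: "M \<ge> Suc K"
  shows "\<forall>la\<in>RR theta c M. dimq1 q la \<le> A0 * exp (QQ theta c * (\<Sum>j\<in>{Suc K..<M}. q ^ (j - K))) *
            path_wt q (EE theta M) * q powi ((1 - int K) * tt theta M la)"
  using M
proof (induction M rule: dec_induct)
  case base
  show ?case
  proof
    fix la assume la: "la \<in> RR theta c (Suc K)"
    define D where "D = path_wt q (EE theta (Suc K)) * q powi ((1 - int K) * tt theta (Suc K) la)"
    have D0: "0 < D" using q0 path_wt_pos[OF q0] by (simp add: D_def)
    have "dimq1 q la / D \<le> A0"
      unfolding A0_def D_def
      by (rule member_le_sum[OF la _ RR_finite])
        (use q0 path_wt_pos[OF q0] dimq1_nonneg[OF q0] in \<open>auto intro!: divide_nonneg_pos\<close>)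
    hence "dimq1 q la \<le> A0 * D" using D0 by (simp add: divide_le_eq)
    thus "dimq1 q la \<le> A0 * exp (QQ theta c * (\<Sum>j\<in>{Suc K..<Suc K}. q ^ (j - K))) *
            path_wt q (EE theta (Suc K)) * q powi ((1 - int K) * tt theta (Suc K) la)"
      by (simp add: D_def mult.assoc)
  qed
next
  case (step M)
  define S where "S = (\<Sum>j\<in>{Suc K..<M}. q ^ (j - K))"
  have A00: "0 \<le> A0"
    unfolding A0_def
    by (rule sum_nonneg) (use q0 path_wt_pos[OF q0] dimq1_nonneg[OF q0] in \<open>auto intro!: divide_nonneg_pos\<close>)
  have QQ0: "0 \<le> QQ theta c" by (simp add: QQ_def)
  show ?case
  proof
    fix la assume la: "la \<in> RR theta c (Suc M)"
    have "dimq1 q la \<le> A0 * exp (QQ theta c * S) * (1 + QQ theta c * q ^ (M - K)) *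
            path_wt q (EE theta (Suc M)) * q powi ((1 - int K) * tt theta (Suc M) la)"
      by (rule step_bound[OF q0 q1 mono Kc step.hyps(1) _ step.IH[folded S_def] la])
        (use A00 in simp)
    also have "\<dots> \<le> A0 * exp (QQ theta c * S) * exp (QQ theta c * q ^ (M - K)) *
            path_wt q (EE theta (Suc M)) * q powi ((1 - int K) * tt theta (Suc M) la)"
    proof -
      have "A0 * exp (QQ theta c * S) * (1 + QQ theta c * q ^ (M - K)) \<le>
            A0 * exp (QQ theta c * S) * exp (QQ theta c * q ^ (M - K))"
        by (rule mult_left_mono) (use A00 in auto)
      moreover have "0 \<le> path_wt q (EE theta (Suc M)) * q powi ((1 - int K) * tt theta (Suc M) la)"
        using q0 path_wt_pos[OF q0] by (simp add: less_imp_le)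
      ultimately show ?thesis by (metis (no_types, lifting) mult.assoc mult_right_mono)
    qed
    also have "A0 * exp (QQ theta c * S) * exp (QQ theta c * q ^ (M - K)) =
               A0 * exp (QQ theta c * (\<Sum>j\<in>{Suc K..<Suc M}. q ^ (j - K)))"
      using step.hyps(1) by (simp add: S_def mult.assoc exp_add[symmetric] distrib_left)
    finally show "dimq1 q la \<le> A0 * exp (QQ theta c * (\<Sum>j\<in>{Suc K..<Suc M}. q ^ (j - K))) *
            path_wt q (EE theta (Suc M)) * q powi ((1 - int K) * tt theta (Suc M) la)" .
  qed
qed

lemma dim_bound: "\<exists>Ab. \<forall>n\<ge>Suc K. dimq1 q (lam theta n) \<le> Ab * path_wt q (EE theta n)"
proof -
  define A0 where "A0 = (\<Sum>la\<in>RR theta c (Suc K). dimq1 q la /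
                   (path_wt q (EE theta (Suc K)) * q powi ((1 - int K) * tt theta (Suc K) la)))"
  have A00: "0 \<le> A0"
    unfolding A0_def
    by (rule sum_nonneg) (use q0 path_wt_pos[OF q0] dimq1_nonneg[OF q0] in \<open>auto intro!: divide_nonneg_pos\<close>)
  have QQ0: "0 \<le> QQ theta c" by (simp add: QQ_def)
  define Ab where "Ab = A0 * exp (QQ theta c * (1 / ((1 - q) * q ^ K)))"
  show ?thesis
  proof (intro exI allI impI)
    fix n assume n: "n \<ge> Suc K"
    have "dimq1 q (lam theta n) \<le> A0 * exp (QQ theta c * (\<Sum>j\<in>{Suc K..<n}. q ^ (j - K))) *
            path_wt q (EE theta n) * q powi ((1 - int K) * tt theta n (lam theta n))"
      using dim_bound_aux[OF n] lam_RR unfolding A0_def by blast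
    also have "tt theta n (lam theta n) = 0" by (simp add: tt_def)
    also have "(\<Sum>j\<in>{Suc K..<n}. q ^ (j - K)) \<le> 1 / ((1 - q) * q ^ K)"
    proof -
      have "(\<Sum>j\<in>{Suc K..<n}. q ^ (j - K)) = (\<Sum>j\<in>{Suc K..<n}. q ^ j) / q ^ K"
        unfolding sum_divide_distrib
      proof (rule sum.cong[OF refl])
        fix j assume "j \<in> {Suc K..<n}"
        hence "j = (j - K) + K" by simp
        hence "q ^ j = q ^ (j - K) * q ^ K" by (metis power_add)
        thus "q ^ (j - K) = q ^ j / q ^ K" using q0 by simp
      qed
      also have "(\<Sum>j\<in>{Suc K..<n}. q ^ j) \<le> (\<Sum>j<n. q ^ j)"
        by (rule sum_mono2) (use q0 in auto)
      also have "(\<Sum>j<n. q ^ j) \<le> 1 / (1 - q)"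
        using q0 q1 by (simp add: sum_gp_strict divide_le_eq_1 field_simps)
      finally show ?thesis using q0 q1
        by (simp add: divide_right_mono field_simps)
    qed
    hence "QQ theta c * (\<Sum>j\<in>{Suc K..<n}. q ^ (j - K)) \<le> QQ theta c * (1 / ((1 - q) * q ^ K))"
      using QQ0 by (rule mult_left_mono)
    hence "exp (QQ theta c * (\<Sum>j\<in>{Suc K..<n}. q ^ (j - K))) \<le> exp (QQ theta c * (1 / ((1 - q) * q ^ K)))"
      by (simp only: exp_le_cancel_iff)
    hence "A0 * exp (QQ theta c * (\<Sum>j\<in>{Suc K..<n}. q ^ (j - K))) * path_wt q (EE theta n) \<le>
           Ab * path_wt q (EE theta n)"
      unfolding Ab_def using A00 path_wt_pos[OF q0]
      by (intro mult_right_mono mult_left_mono) (auto simp: less_imp_le)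
    finally show "dimq1 q (lam theta n) \<le> Ab * path_wt q (EE theta n)" by simp
  qed
qed

end

context
  fixes q :: real and theta :: "nat \<Rightarrow> int" and P :: "(nat \<Rightarrow> edge) measure"
  assumes q0: "0 < q" and q1: "q < 1" and mono: "mono theta" and isP: "is_P_theta q theta P"
begin

lemma probP: "prob_space P" using isP by (simp add: is_P_theta_def)

lemma finP: "finite_measure P" using probP by (simp add: prob_space_def)

lemma gens_sub: "{cyl al | al la. al \<in> fpaths [] la} \<subseteq> Pow Omega"
  by (auto simp: cyl_def)

lemma setsP: "sets P = sigma_sets Omega {cyl al | al la. al \<in> fpaths [] la}"
  using isP sets_measure_of[OF gens_sub] by (simp add: is_P_theta_def GT_space_def)

lemma spaceP: "space P = Omega"
proof -
  have "space P = space GT_space" using isP by (intro sets_eq_imp_space_eq) (simp add: is_P_theta_def)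
  thus ?thesis by (simp add: GT_space_def space_measure_of_conv)
qed

lemma cyl_sets: "al \<in> fpaths [] la \<Longrightarrow> cyl al \<in> sets P"
  unfolding setsP by (rule sigma_sets.Basic) blast

lemma cyl_Nil: "cyl [] = Omega" by (simp add: cyl_def)

lemma prefix_sets: "om \<in> Omega \<Longrightarrow> cyl (map om [0..<M]) \<in> sets P"
proof (cases M)
  case 0
  thus ?thesis using sets.top[of P] by (simp add: cyl_Nil spaceP)
next
  case (Suc M')
  assume "om \<in> Omega"
  thus ?thesis using Omega_prefix[of om M] Suc by (intro cyl_sets) auto
qed

lemma sing_lim:
  assumes om: "om \<in> Omega"
  shows "{om} \<in> sets P" "(\<lambda>M. measure P (cyl (map om [0..<M]))) \<longlonglongrightarrow> measure P {om}"
proof -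
  have eq: "(\<Inter>M. cyl (map om [0..<M])) = {om}"
  proof (intro equalityI subsetI)
    fix x assume x: "x \<in> (\<Inter>M. cyl (map om [0..<M]))"
    have "x i = om i" for i
    proof -
      have "x \<in> cyl (map om [0..<Suc i])" using x by blast
      thus ?thesis by (auto simp: cyl_def nth_append)
    qed
    thus "x \<in> {om}" by auto
  next
    fix x assume "x \<in> {om}"
    thus "x \<in> (\<Inter>M. cyl (map om [0..<M]))" using om by (auto simp: cyl_def)
  qed
  have r: "range (\<lambda>M. cyl (map om [0..<M])) \<subseteq> sets P" using prefix_sets[OF om] by auto
  have d: "decseq (\<lambda>M. cyl (map om [0..<M]))"
    unfolding decseq_def by (auto simp: cyl_def)
  show "{om} \<in> sets P" unfolding eq[symmetric] using r by auto
  show "(\<lambda>M. measure P (cyl (map om [0..<M]))) \<longlonglongrightarrow> measure P {om}"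
    using finite_measure.finite_Lim_measure_decseq[OF finP r d] unfolding eq .
qed

definition "phi M = measure P (ends M (lam theta M)) / dimq1 q (lam theta M)"

lemma central:
  assumes "M \<ge> 1" "al \<in> fpaths [] (lam theta M)"
  shows "measure P (cyl al) = path_wt q al * phi M"
proof -
  have "measure P (cyl al) / path_wt q al = phi M"
    using isP assms lam_sign[OF mono, of M] unfolding is_P_theta_def q_central_def phi_def by blast
  thus ?thesis using path_wt_pos[OF q0, of al] by (simp add: field_simps)
qed

lemma phi_lim:
  assumes "M \<ge> 1"
  shows "(\<lambda>n. dimq q (lam theta M) (lam theta n) / dimq1 q (lam theta n)) \<longlonglongrightarrow> phi M"
  using isP assms lam_sign[OF mono, of M] unfolding is_P_theta_def phi_def by blast

lemma e_Omega: "epath theta \<in> Omega" by (rule epath_Omega[OF mono])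

lemma EE_path: "M \<ge> 1 \<Longrightarrow> EE theta M \<in> fpaths [] (lam theta M)"
  using Omega_prefix[OF e_Omega, of M] by (simp add: EE_def epath_def)

lemma seg_path: "M < n \<Longrightarrow> map (epath theta) [M..<n] \<in> fpaths (lam theta M) (lam theta n)"
  using Omega_seg[OF e_Omega, of M n] by (simp add: epath_def)

lemma EE_split: "M \<le> n \<Longrightarrow> EE theta n = EE theta M @ map (epath theta) [M..<n]"
  unfolding EE_def by (metis map_append le_Suc_ex upt_add_eq_append zero_le)

lemma dimq_lower:
  assumes "1 \<le> M" "M < n"
  shows "path_wt q (map (epath theta) [M..<n]) \<le> dimq q (lam theta M) (lam theta n)"
proof -
  have fin: "finite (fpaths (lam theta M) (lam theta n))"
  proof (rule finite_imageD)
    show "finite ((\<lambda>al. EE theta M @ al) ` fpaths (lam theta M) (lam theta n))"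
      by (rule finite_subset[OF _ fpaths_finite[of "lam theta n"]])
        (use EE_path[OF assms(1)] in \<open>auto intro: fpaths_append\<close>)
    show "inj_on (\<lambda>al. EE theta M @ al) (fpaths (lam theta M) (lam theta n))"
      by (simp add: inj_on_def)
  qed
  show ?thesis unfolding dimq_def
    by (rule member_le_sum[OF seg_path[OF assms(2)] _ fin]) (use path_wt_pos[OF q0] in \<open>simp add: less_imp_le\<close>)
qed

end

lemma SymN_props:
  assumes "f \<in> SymN N"
  shows "(\<forall>om\<in>Omega. f om \<in> Omega) \<and> (\<forall>om i. N \<le> i \<longrightarrow> f om i = om i)"
  using assms
proof (induction rule: SymN.induct)
  case SymN_id thus ?case by simp
next
  case (SymN_gen f la g0)
  have lenla: "length la = N" using SymN_gen.hyps(2) by (simp add: sign_def)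
  have "gen N la g0 om \<in> Omega" if om: "om \<in> Omega" for om
  proof (cases "map om [0..<N] \<in> fpaths [] la")
    case True
    let ?al = "g0 (map om [0..<N])"
    have al: "?al \<in> fpaths [] la" using True SymN_gen.hyps(3) by (auto simp: bij_betw_def)
    have lal: "length ?al = N" using fpaths_length[OF al] lenla by simp
    have N0: "N \<noteq> 0" using True by (cases N) auto
    have "snd (last (map om [0..<N])) = la" using True by (simp add: fpaths_def)
    hence sl: "snd (om (length ?al - 1)) = la" using N0 lal by (simp add: last_map)
    have "gen N la g0 om = splc ?al om"
      using True lal by (auto simp: gen_def splc_def fun_eq_iff)
    thus ?thesis using splc_Omega[OF al om sl] by simp
  next
    case False thus ?thesis using om by (simp add: gen_def)
  qed
  moreover have "gen N la g0 om i = om i" if "N \<le> i" for om i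
    using that by (simp add: gen_def)
  ultimately show ?case using SymN_gen.IH by auto
qed

lemma Sym_props:
  assumes "g \<in> Sym"
  shows "(\<forall>om\<in>Omega. g om \<in> Omega) \<and> (\<exists>N. \<forall>om i. N \<le> i \<longrightarrow> g om i = om i)"
  using assms SymN_props unfolding Sym_def by blast

lemma orbit_point:
  assumes "g \<in> Sym" "om \<in> Omega"
  shows "g om \<in> Omega" "g om \<in> range (\<lambda>al. splc al om)"
proof -
  show "g om \<in> Omega" using Sym_props[OF assms(1)] assms(2) by blast
  obtain N where N: "\<forall>om i. N \<le> i \<longrightarrow> g om i = om i" using Sym_props[OF assms(1)] by blast
  have "g om = splc (map (g om) [0..<N]) om"
    using N by (auto simp: splc_def fun_eq_iff)
  thus "g om \<in> range (\<lambda>al. splc al om)" by blast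
qed

lemma orbit_reach:
  assumes N: "N \<ge> 1" and la: "la \<in> sign N" and al: "al \<in> fpaths [] la"
    and om: "om \<in> Omega" and p: "map om [0..<N] \<in> fpaths [] la"
  shows "\<exists>g\<in>Sym. g om = splc al om"
proof -
  define b where "b = map om [0..<N]"
  define g0 where "g0 = (\<lambda>x. if x = b then al else if x = al then b else x)"
  have bij: "bij_betw g0 (fpaths [] la) (fpaths [] la)"
    by (rule bij_betw_byWitness[where f' = g0]) (use al p in \<open>auto simp: g0_def b_def\<close>)
  have "gen N la g0 \<circ> id \<in> SymN N" by (rule SymN_gen[OF SymN_id la bij])
  hence g: "gen N la g0 \<in> Sym" unfolding Sym_def by auto
  have lal: "length al = N" using fpaths_length[OF al] la by (simp add: sign_def)
  have "gen N la g0 om = splc al om"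
    using p lal by (simp add: gen_def splc_def g0_def b_def[symmetric])
  thus ?thesis using g by blast
qed


lemma eventually_const_theta:
  assumes mono: "mono theta" and bd: "\<exists>B. \<forall>k. \<bar>theta k\<bar> \<le> (B::int)"
  shows "\<exists>K c. \<forall>j\<ge>K. theta j = c"
proof -
  obtain B where B: "\<forall>k. \<bar>theta k\<bar> \<le> B" using bd by blast
  have fin: "finite (range theta)"
  proof (rule finite_subset[of _ "{-B..B}"])
    have "theta k \<in> {-B..B}" for k using B[rule_format, of k] by (simp add: abs_le_iff)
    thus "range theta \<subseteq> {-B..B}" by auto
  qed simp
  define c where "c = Max (range theta)"
  have "c \<in> range theta" unfolding c_def using fin by (intro Max_in) auto
  then obtain K where K: "theta K = c" by auto
  have "\<forall>j\<ge>K. theta j = c"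
  proof (intro allI impI)
    fix j assume "K \<le> j"
    hence "theta K \<le> theta j" using mono by (simp add: mono_def)
    moreover have "theta j \<le> c" unfolding c_def using fin by (intro Max_ge) auto
    ultimately show "theta j = c" using K by simp
  qed
  thus ?thesis by blast
qed

context
  fixes q :: real and theta :: "nat \<Rightarrow> int" and P :: "(nat \<Rightarrow> edge) measure"
    and K :: nat and c :: int
  assumes q0: "0 < q" and q1: "q < 1" and mono: "mono theta" and isP: "is_P_theta q theta P"
    and Kc: "\<forall>j\<ge>K. theta j = c"
begin

lemmas probP' = probP[OF q0 q1 mono isP]
lemmas finP' = finP[OF q0 q1 mono isP]
lemmas sl1 = sing_lim(1)[OF q0 q1 mono isP]
lemmas sl2 = sing_lim(2)[OF q0 q1 mono isP]
lemmas central' = central[OF q0 q1 mono isP]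
lemmas phi_lim' = phi_lim[OF q0 q1 mono isP]
lemmas eO = e_Omega[OF q0 q1 mono isP]
lemmas EE_path' = EE_path[OF q0 q1 mono isP]
lemmas seg_path' = seg_path[OF q0 q1 mono isP]
lemmas EE_split' = EE_split[OF q0 q1 mono isP]
lemmas dimq_lower' = dimq_lower[OF q0 q1 mono isP]

lemma main:
  shows "measure P {epath theta} > 0 \<and> measure P (\<Union>g\<in>Sym. {g (epath theta)}) = 1"
proof -
  let ?e = "epath theta"
  obtain Ab where Ab: "\<forall>n\<ge>Suc K. dimq1 q (lam theta n) \<le> Ab * path_wt q (EE theta n)"
    using dim_bound[OF q0 q1 mono Kc] by blast
  define r where "r n = dimq1 q (lam theta n) / path_wt q (EE theta n)" for n
  have pw: "0 < path_wt q al" for al by (rule path_wt_pos[OF q0])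
  have dim_ge: "path_wt q (EE theta n) \<le> dimq1 q (lam theta n)" if "n \<ge> 1" for n
    unfolding dimq1_def dimq_def
    by (rule member_le_sum[OF EE_path'[OF that] _ fpaths_finite]) (simp add: less_imp_le pw)
  have r_pos: "0 < r n" if "n \<ge> 1" for n
    using dim_ge[OF that] pw[of "EE theta n"] by (simp add: r_def)
  have r_le: "r n \<le> Ab" if "n \<ge> Suc K" for n
    using Ab that pw[of "EE theta n"] by (simp add: r_def divide_le_eq)
  have bdd: "bdd_above (r ` {Suc K..})" using r_le by (auto intro!: bdd_aboveI[of _ Ab])
  define L where "L = (SUP n\<in>{Suc K..}. r n)"
  have rL: "r n \<le> L" if "n \<ge> Suc K" for n unfolding L_def by (rule cSUP_upper) (use that bdd in auto)
  have L0: "0 < L" using rL[of "Suc K"] r_pos[of "Suc K"] by simp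
  have dimq1_pos: "0 < dimq1 q (lam theta n)" if "n \<ge> 1" for n
    using dim_ge[OF that] pw[of "EE theta n"] by simp
  have cylE: "1 / L \<le> measure P (cyl (EE theta M))" if M: "M \<ge> 1" for M
  proof -
    have lim: "(\<lambda>n. path_wt q (EE theta M) * (dimq q (lam theta M) (lam theta n) / dimq1 q (lam theta n)))
               \<longlonglongrightarrow> path_wt q (EE theta M) * phi q theta P M"
      by (rule tendsto_mult_left[OF phi_lim'[OF M]])
    have "1 / L \<le> path_wt q (EE theta M) * phi q theta P M"
    proof (rule LIMSEQ_le_const[OF lim], intro exI allI impI)
      fix n assume n: "n \<ge> max (Suc M) (Suc K)"
      have "path_wt q (EE theta n) = path_wt q (EE theta M) * path_wt q (map (epath theta) [M..<n])"
        using EE_split'[of M n] n by simp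
      also have "\<dots> \<le> path_wt q (EE theta M) * dimq q (lam theta M) (lam theta n)"
        using dimq_lower'[OF M, of n] n pw[of "EE theta M"] by (intro mult_left_mono) auto
      finally have a: "path_wt q (EE theta n) \<le> path_wt q (EE theta M) * dimq q (lam theta M) (lam theta n)" .
      have "1 / L \<le> 1 / r n"
        using rL[of n] r_pos[of n] n L0 by (intro divide_left_mono) auto
      also have "1 / r n = path_wt q (EE theta n) / dimq1 q (lam theta n)"
        using dimq1_pos[of n] pw[of "EE theta n"] n by (simp add: r_def)
      also have "\<dots> \<le> path_wt q (EE theta M) * dimq q (lam theta M) (lam theta n) / dimq1 q (lam theta n)"
        using a dimq1_pos[of n] n by (intro divide_right_mono) auto
      finally show "1 / L \<le> path_wt q (EE theta M) * (dimq q (lam theta M) (lam theta n) / dimq1 q (lam theta n))"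
        by simp
    qed
    also have "\<dots> = measure P (cyl (EE theta M))"
      using central'[OF M EE_path'[OF M]] by simp
    finally show ?thesis .
  qed
  have limE: "(\<lambda>M. measure P (cyl (EE theta M))) \<longlonglongrightarrow> measure P {?e}"
    using sl2[OF eO] by (simp add: EE_def)
  have Pe: "1 / L \<le> measure P {?e}"
  proof (rule LIMSEQ_le_const[OF limE], intro exI allI impI)
    fix n :: nat assume "n \<ge> 1" thus "1 / L \<le> measure P (cyl (EE theta n))" by (rule cylE)
  qed
  have Pe0: "0 < measure P {?e}" using Pe L0 by (meson divide_pos_pos less_le_trans zero_less_one)
  have Psp: "measure P {splc al ?e} = path_wt q al / path_wt q (EE theta N) * measure P {?e}"
    if N: "N \<ge> 1" and al: "al \<in> fpaths [] (lam theta N)" for N al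
  proof -
    have lal: "length al = N" using fpaths_length[OF al] by simp
    have "snd (?e (length al - 1)) = lam theta N" using lal N by (simp add: epath_def)
    hence spO: "splc al ?e \<in> Omega" by (rule splc_Omega[OF al eO])
    have limX: "(\<lambda>M. measure P (cyl (map (splc al ?e) [0..<M]))) \<longlonglongrightarrow> measure P {splc al ?e}"
      by (rule sl2[OF spO])
    have "(\<lambda>M. path_wt q al / path_wt q (EE theta N) * measure P (cyl (EE theta M)))
             \<longlonglongrightarrow> path_wt q al / path_wt q (EE theta N) * measure P {?e}"
      by (rule tendsto_mult_left[OF limE])
    moreover have "eventually (\<lambda>M. path_wt q al / path_wt q (EE theta N) * measure P (cyl (EE theta M)) =
                      measure P (cyl (map (splc al ?e) [0..<M]))) sequentially"
      unfolding eventually_sequentially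
    proof (intro exI allI impI)
      fix M assume M: "M \<ge> Suc N"
      have seg: "map ?e [N..<M] \<in> fpaths (lam theta N) (lam theta M)" using seg_path'[of N M] M by simp
      have "map (splc al ?e) [0..<M] = al @ map ?e [N..<M]" using map_splc[of al M ?e] lal M by simp
      hence "measure P (cyl (map (splc al ?e) [0..<M])) = path_wt q al * path_wt q (map ?e [N..<M]) * phi q theta P M"
        using central'[of M "al @ map ?e [N..<M]"] fpaths_append[OF al seg] M by simp
      moreover have "measure P (cyl (EE theta M)) = path_wt q (EE theta N) * path_wt q (map ?e [N..<M]) * phi q theta P M"
        using central'[of M "EE theta M"] EE_path'[of M] EE_split'[of N M] M by simp
      ultimately show "path_wt q al / path_wt q (EE theta N) * measure P (cyl (EE theta M)) =
                      measure P (cyl (map (splc al ?e) [0..<M]))"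
        using pw[of "EE theta N"] by simp
    qed
    ultimately have "(\<lambda>M. measure P (cyl (map (splc al ?e) [0..<M]))) \<longlonglongrightarrow>
                      path_wt q al / path_wt q (EE theta N) * measure P {?e}"
      by (rule Lim_transform_eventually)
    from LIMSEQ_unique[OF limX this] show ?thesis .
  qed
  define Orb where "Orb = (\<Union>g\<in>Sym. {g ?e})"
  have O_sub: "Orb \<subseteq> range (\<lambda>al. splc al ?e)" using orbit_point[OF _ eO] by (auto simp: Orb_def)
  have O_sets: "Orb \<in> sets P"
  proof (rule sets.countable)
    show "countable Orb" by (rule countable_subset[OF O_sub]) simp
    fix a assume "a \<in> Orb"
    then obtain g where "g \<in> Sym" "a = g ?e" by (auto simp: Orb_def)
    thus "{a} \<in> sets P" using orbit_point(1)[OF _ eO] sl1 by blast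
  qed
  have O_ge: "r N / L \<le> measure P Orb" if N: "N \<ge> Suc K" for N
  proof -
    let ?F = "fpaths [] (lam theta N)"
    have N1: "N \<ge> 1" using N by simp
    have sub: "(\<lambda>al. splc al ?e) ` ?F \<subseteq> Orb"
    proof
      fix x assume "x \<in> (\<lambda>al. splc al ?e) ` ?F"
      then obtain al where al: "al \<in> ?F" "x = splc al ?e" by auto
      have "map ?e [0..<N] \<in> ?F" using EE_path'[OF N1] by (simp add: EE_def)
      then obtain g where g: "g \<in> Sym" "g ?e = splc al ?e"
        using orbit_reach[OF N1 lam_sign[OF mono] al(1) eO] by blast
      have "x = g ?e" using al g by simp
      thus "x \<in> Orb" using g(1) unfolding Orb_def by blast
    qed
    have inj: "inj_on (\<lambda>al. splc al ?e) ?F"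
    proof (rule inj_onI)
      fix a b assume a: "a \<in> ?F" and b: "b \<in> ?F" and eq: "splc a ?e = splc b ?e"
      have la: "length a = N" "length b = N" using fpaths_length[OF a] fpaths_length[OF b] by simp_all
      have ma: "map (splc a ?e) [0..<N] = a" and mb: "map (splc b ?e) [0..<N] = b"
        using map_splc[of a N ?e] map_splc[of b N ?e] la by simp_all
      have "a = map (splc a ?e) [0..<N]" using ma by simp
      also have "\<dots> = map (splc b ?e) [0..<N]" by (simp only: eq)
      also have "\<dots> = b" by (rule mb)
      finally show "a = b" .
    qed
    have fin: "finite ((\<lambda>al. splc al ?e) ` ?F)" using fpaths_finite by simp
    have sing: "{x} \<in> sets P" if xF: "x \<in> (\<lambda>al. splc al ?e) ` ?F" for x
    proof -
      obtain al where al: "al \<in> ?F" "x = splc al ?e" using xF by auto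
      have lal: "length al = N" using fpaths_length[OF al(1)] by simp
      have "snd (?e (length al - 1)) = lam theta N" using lal N1 by (simp add: epath_def)
      thus ?thesis using splc_Omega[OF al(1) eO] sl1 al(2) by blast
    qed
    have "r N * (1 / L) \<le> r N * measure P {?e}"
      using Pe r_pos[OF N1] by (intro mult_left_mono) auto
    hence "r N / L \<le> r N * measure P {?e}" by simp
    also have "r N * measure P {?e} = (\<Sum>al\<in>?F. path_wt q al / path_wt q (EE theta N) * measure P {?e})"
      by (simp add: r_def dimq1_def dimq_def sum_distrib_right sum_divide_distrib)
    also have "\<dots> = (\<Sum>al\<in>?F. measure P {splc al ?e})"
      using Psp[OF N1] by simp
    also have "\<dots> = (\<Sum>x\<in>(\<lambda>al. splc al ?e) ` ?F. measure P {x})"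
      by (simp add: sum.reindex[OF inj])
    also have "\<dots> = measure P ((\<lambda>al. splc al ?e) ` ?F)"
      by (rule finite_measure.finite_measure_eq_sum_singleton[OF finP' fin sing, symmetric])
    also have "\<dots> \<le> measure P Orb"
      by (rule finite_measure.finite_measure_mono[OF finP' sub O_sets])
    finally show ?thesis .
  qed
  have "measure P Orb = 1"
  proof (rule ccontr)
    assume ne: "measure P Orb \<noteq> 1"
    have "measure P Orb \<le> 1" by (rule prob_space.prob_le_1[OF probP'])
    hence lt: "L * measure P Orb < L" using ne L0 by simp
    have "L * measure P Orb < (SUP n\<in>{Suc K..}. r n)" using lt by (simp only: L_def)
    hence "\<exists>n\<in>{Suc K..}. L * measure P Orb < r n"
      by (subst (asm) less_cSUP_iff[OF _ bdd]) auto
    then obtain N where N: "N \<ge> Suc K" "L * measure P Orb < r N" by auto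
    have "r N / L \<le> measure P Orb" by (rule O_ge[OF N(1)])
    hence "r N \<le> L * measure P Orb" using L0 by (simp add: divide_le_eq mult.commute)
    thus False using N(2) by simp
  qed
  thus ?thesis using Pe0 by (simp add: Orb_def)
qed

end


theorem lemma4p2:
  fixes q :: real and theta :: "nat \<Rightarrow> int" and P :: "(nat \<Rightarrow> edge) measure"
  assumes "0 < q" and "q < 1"
    and "mono theta"
    and "\<exists>B. \<forall>k. \<bar>theta k\<bar> \<le> B"
    and "is_P_theta q theta P"
  shows "measure P {epath theta} > 0 \<and>
         measure P (\<Union>g\<in>Sym. {g (epath theta)}) = 1"
proof -
  obtain K c where Kc: "\<forall>j\<ge>K. theta j = c"
    using eventually_const_theta[OF assms(3) assms(4)] by blast
  show ?thesis by (rule main[OF assms(1) assms(2) assms(3) assms(5) Kc])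
qed

end
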